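(* Let $\Omega\subset\mathbb{R}^d$ be a bounded domain with a mesh $\mathcal{M}$ as described in the context, let $0=t_0<t_1<\dots<t_N=T$ be a uniform time grid with step $\delta t$, and let $\gamma>1$. Let $(\rho_K^n,e_K^n,p_K^n)_{K\in\mathcal{M},0\le n\le N}$ be positive real numbers and $(u_{K,\sigma}^n)$ normal face velocities as in the context, satisfying, for every $K\in\mathcal{M}$ and $0\le n\le N-1$, the implicit scheme \[ \frac{|K|}{\delta t}(\rho_K^{n+1}-\rho_K^n)+\sum_{\sigma\in\mathcal{E}(K)}F_{K,\sigma}^{n+1}=0, \] \[ \frac{|K|}{\delta t}(\rho_K^{n+1}e_K^{n+1}-\rho_K^ne_K^n)+\sum_{\sigma\in\mathcal{E}(K)}F_{K,\sigma}^{n+1}e_\sigma^{n+1}+p_K^{n+1}\sum_{\sigma\in\mathcal{E}(K)}|\sigma|\,u_{K,\sigma}^{n+1}\ge 0, \qquad p_K^{n+1}=(\gamma-1)\rho_K^{n+1}e_K^{n+1}, \] where $F_{K,\sigma}^{n+1}=|\sigma|\,\rho_\sigma^{n+1}u_{K,\sigma}^{n+1}$, and where the face values are upwind: for $\sigma=K|L\in\mathcal{E}_{\rm int}$, $\rho_\sigma^{n+1}=\rho_K^{n+1}$ and $e_\sigma^{n+1}=e_K^{n+1}$ if $u_{K,\sigma}^{n+1}\ge0$, and $\rho_\sigma^{n+1}=\rho_L^{n+1}$, $e_\sigma^{n+1}=e_L^{n+1}$ otherwise. Then for every $K\in\mathcal{M}$ and $0\le n\le N-1$, \[ \frac{|K|}{\delta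 t}(\eta_K^{n+1}-\eta_K^n)+\sum_{\sigma\in\mathcal{E}(K)}|\sigma|\,\eta_\sigma^{n+1}u_{K,\sigma}^{n+1}\le 0, \] where $\eta_K^m=\varphi_\rho(\rho_K^m)+\rho_K^m\varphi_e(e_K^m)$ for $m=n,n+1$, and $\eta_\sigma^{n+1}=\varphi_\rho(\rho_\sigma^{n+1})+\rho_\sigma^{n+1}\varphi_e(e_\sigma^{n+1})$, with $\varphi_\rho(z)=z\log z$ and $\varphi_e(z)=-\frac{1}{\gamma-1}\log z$ for $z>0$.
   Context: Mesh: $\mathcal{M}$ is a finite decomposition of $\Omega$ into polytopal cells $K$, regular in the finite element sense; $\mathcal{E}$ is the set of $(d-1)$-faces, $\mathcal{E}(K)$ the faces of $K$ (bounded in number), $\mathcal{E}_{\rm int}$ the faces interior to $\Omega$, $\mathcal{E}_{\rm ext}$ those on $\partial\Omega$; an interior face separating cells $K$ and $L$ is written $\sigma=K|L$. $|K|$ is the $d$-measure of $K$ and $|\sigma|$ the $(d-1)$-measure of $\sigma$. For each $K$, $\sigma\in\mathcal{E}(K)$ and $n$, $u_{K,\sigma}^n\in\mathbb{R}$ approximates the outward normal velocity on $\sigma$; $u_{K,\sigma}^n=0$ for $\sigma\in\mathcal{E}_{\rm ext}$ (so all face terms on external faces vanish) and $u_{L,\sigma}^n=-u_{K,\sigma}^n$ for $\sigma=K|L$. Face values $\rho_\sigma^n,e_\sigma^n$ depend only on the face $\sigma$ and are positive; all $\rho_K^n,e_K^n$ are positive. *)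

theory Defs
  imports Complex_Main
begin

definition phi_rho :: "real \<Rightarrow> real" where
  "phi_rho z = z * ln z"

definition phi_e :: "real \<Rightarrow> real \<Rightarrow> real" where
  "phi_e \<gamma> z = - (1 / (\<gamma> - 1)) * ln z"

definition eta :: "real \<Rightarrow> real \<Rightarrow> real \<Rightarrow> real" where
  "eta \<gamma> r e = phi_rho r + r * phi_e \<gamma> e"

definition face_between ::
  "'c set \<Rightarrow> ('c \<Rightarrow> 'f set) \<Rightarrow> 'f set \<Rightarrow> 'f \<Rightarrow> 'c \<Rightarrow> 'c \<Rightarrow> bool" where
  "face_between M EK Eint \<sigma> K L \<longleftrightarrow>
     K \<in> M \<and> L \<in> M \<and> K \<noteq> L \<and> \<sigma> \<in> Eint \<and> \<sigma> \<in> EK K \<and> \<sigma> \<in> EK L"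

end

theory Submission
  imports Defs
begin


lemma eta_split_k:
  fixes a b r \<epsilon> k :: real
  assumes "a > 0" "b > 0" "r > 0" "\<epsilon> > 0"
  shows "a * ln a + a * (- k * ln b) = (r * ln r + r * (- k * ln \<epsilon>))
     + (ln r + 1 + k * (1 - ln \<epsilon>)) * (a - r)
     + (- k / \<epsilon>) * (a * b - r * \<epsilon>)
     + (a * (ln a - ln r) - a + r + k * a * (b / \<epsilon> - 1 - (ln b - ln \<epsilon>)))"
  using assms by (simp add: field_simps)

lemma eta_split:
  fixes a b r \<epsilon> \<gamma> :: real
  assumes "a > 0" "b > 0" "r > 0" "\<epsilon> > 0"
  shows "eta \<gamma> a b = eta \<gamma> r \<epsilon>
     + (ln r + 1 + (1 / (\<gamma> - 1)) * (1 - ln \<epsilon>)) * (a - r)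
     + (- (1 / (\<gamma> - 1)) / \<epsilon>) * (a * b - r * \<epsilon>)
     + (a * (ln a - ln r) - a + r + (1 / (\<gamma> - 1)) * a * (b / \<epsilon> - 1 - (ln b - ln \<epsilon>)))"
  unfolding eta_def phi_rho_def phi_e_def using eta_split_k[OF assms, of "1 / (\<gamma> - 1)"] by simp

lemma D_nonneg:
  fixes a b r \<epsilon> \<gamma> :: real
  assumes "a > 0" "b > 0" "r > 0" "\<epsilon> > 0" "\<gamma> > 1"
  shows "a * (ln a - ln r) - a + r + (1 / (\<gamma> - 1)) * a * (b / \<epsilon> - 1 - (ln b - ln \<epsilon>)) \<ge> 0"
proof -
  have h1: "ln (r / a) \<le> r / a - 1" using assms by (intro ln_le_minus_one) simp
  have "ln (r/a) = ln r - ln a" using assms by (simp add: ln_div)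
  with h1 have "a * (ln a - ln r) \<ge> a * (1 - r / a)" using assms
    by (intro mult_left_mono) auto
  moreover have "a * (1 - r / a) = a - r" using assms by (simp add: field_simps)
  ultimately have A: "a * (ln a - ln r) - a + r \<ge> 0" by linarith
  have h2: "ln (b / \<epsilon>) \<le> b / \<epsilon> - 1" using assms by (intro ln_le_minus_one) simp
  have "ln (b/\<epsilon>) = ln b - ln \<epsilon>" using assms by (simp add: ln_div)
  with h2 have "b / \<epsilon> - 1 - (ln b - ln \<epsilon>) \<ge> 0" by simp
  moreover have "(1 / (\<gamma> - 1)) * a \<ge> 0" using assms by simp
  ultimately have "(1 / (\<gamma> - 1)) * a * (b / \<epsilon> - 1 - (ln b - ln \<epsilon>)) \<ge> 0" by (rule mult_nonneg_nonneg[rotated])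
  with A show ?thesis by linarith
qed

lemma etaK_k:
  fixes r \<epsilon> k :: real
  assumes "\<epsilon> > 0"
  shows "(r * ln r + r * (- k * ln \<epsilon>)) - (ln r + 1 + k * (1 - ln \<epsilon>)) * r - (- k / \<epsilon>) * (r * \<epsilon>) = - r"
  using assms by (simp add: field_simps)

theorem theorem2p3:
  fixes M :: "'c set" and E Eint :: "'f set" and EK :: "'c \<Rightarrow> 'f set"
    and vol :: "'c \<Rightarrow> real" and area :: "'f \<Rightarrow> real"
    and N :: nat and dt T \<gamma> :: real
    and rho e p :: "nat \<Rightarrow> 'c \<Rightarrow> real"
    and u :: "nat \<Rightarrow> 'c \<Rightarrow> 'f \<Rightarrow> real"
    and rhof ef :: "nat \<Rightarrow> 'f \<Rightarrow> real"
  assumes finM: "finite M" and finE: "finite E"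
    and EK_sub: "\<forall>K\<in>M. EK K \<subseteq> E" and Eint_sub: "Eint \<subseteq> E"
    and interior: "\<forall>K\<in>M. \<forall>\<sigma>\<in>EK K \<inter> Eint. \<exists>!L. face_between M EK Eint \<sigma> K L"
    and vol_pos: "\<forall>K\<in>M. vol K > 0"
    and area_pos: "\<forall>\<sigma>\<in>E. area \<sigma> > 0"
    and dt_pos: "dt > 0" and T_def: "T = real N * dt"
    and gamma: "\<gamma> > 1"
    and u_ext: "\<forall>n. \<forall>K\<in>M. \<forall>\<sigma>\<in>EK K. \<sigma> \<notin> Eint \<longrightarrow> u n K \<sigma> = 0"
    and u_anti: "\<forall>n \<sigma> K L. face_between M EK Eint \<sigma> K L \<longrightarrow> u n L \<sigma> = - u n K \<sigma>"
    and rho_pos: "\<forall>n\<le>N. \<forall>K\<in>M. rho n K > 0"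
    and e_pos: "\<forall>n\<le>N. \<forall>K\<in>M. e n K > 0"
    and p_pos: "\<forall>n\<le>N. \<forall>K\<in>M. p n K > 0"
    and rhof_pos: "\<forall>n\<le>N. \<forall>\<sigma>\<in>E. rhof n \<sigma> > 0"
    and ef_pos: "\<forall>n\<le>N. \<forall>\<sigma>\<in>E. ef n \<sigma> > 0"
    and upwind: "\<forall>n<N. \<forall>\<sigma> K L. face_between M EK Eint \<sigma> K L \<longrightarrow>
        (u (Suc n) K \<sigma> > 0 \<longrightarrow> rhof (Suc n) \<sigma> = rho (Suc n) K \<and> ef (Suc n) \<sigma> = e (Suc n) K) \<and>
        (u (Suc n) K \<sigma> = 0 \<longrightarrow>
           (rhof (Suc n) \<sigma> = rho (Suc n) K \<and> ef (Suc n) \<sigma> = e (Suc n) K) \<or>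
           (rhof (Suc n) \<sigma> = rho (Suc n) L \<and> ef (Suc n) \<sigma> = e (Suc n) L))"
    and mass: "\<forall>K\<in>M. \<forall>n<N.
        vol K / dt * (rho (Suc n) K - rho n K)
        + (\<Sum>\<sigma>\<in>EK K. area \<sigma> * rhof (Suc n) \<sigma> * u (Suc n) K \<sigma>) = 0"
    and energy: "\<forall>K\<in>M. \<forall>n<N.
        vol K / dt * (rho (Suc n) K * e (Suc n) K - rho n K * e n K)
        + (\<Sum>\<sigma>\<in>EK K. area \<sigma> * rhof (Suc n) \<sigma> * u (Suc n) K \<sigma> * ef (Suc n) \<sigma>)
        + p (Suc n) K * (\<Sum>\<sigma>\<in>EK K. area \<sigma> * u (Suc n) K \<sigma>) \<ge> 0"
    and eos: "\<forall>K\<in>M. \<forall>n<N. p (Suc n) K = (\<gamma> - 1) * rho (Suc n) K * e (Suc n) K"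
  shows "\<forall>K\<in>M. \<forall>n<N.
        vol K / dt * (eta \<gamma> (rho (Suc n) K) (e (Suc n) K) - eta \<gamma> (rho n K) (e n K))
        + (\<Sum>\<sigma>\<in>EK K. area \<sigma> * eta \<gamma> (rhof (Suc n) \<sigma>) (ef (Suc n) \<sigma>) * u (Suc n) K \<sigma>) \<le> 0"
  proof (intro ballI allI impI)
  fix K n assume K: "K \<in> M" and n: "n < N"
  define r where "r = rho (Suc n) K"
  define \<epsilon> where "\<epsilon> = e (Suc n) K"
  define r0 where "r0 = rho n K"
  define \<epsilon>0 where "\<epsilon>0 = e n K"
  define c1 where "c1 = ln r + 1 + (1 / (\<gamma> - 1)) * (1 - ln \<epsilon>)"
  define c2 where "c2 = - (1 / (\<gamma> - 1)) / \<epsilon>"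
  define D where "D = (\<lambda>a b. a * (ln a - ln r) - a + r + (1 / (\<gamma> - 1)) * a * (b / \<epsilon> - 1 - (ln b - ln \<epsilon>)))"
  define V where "V = vol K / dt"
  have rpos: "r > 0" using rho_pos K n unfolding r_def by simp
  have epos: "\<epsilon> > 0" using e_pos K n unfolding \<epsilon>_def by simp
  have r0pos: "r0 > 0" using rho_pos K n unfolding r0_def by simp
  have e0pos: "\<epsilon>0 > 0" using e_pos K n unfolding \<epsilon>0_def by simp
  have Vpos: "V > 0" using vol_pos K dt_pos unfolding V_def by simp
  have c2nonpos: "c2 \<le> 0" using gamma epos unfolding c2_def by (simp add: divide_nonpos_pos)
  have pK: "p (Suc n) K = (\<gamma> - 1) * r * \<epsilon>" using eos K n unfolding r_def \<epsilon>_def by simp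
  have c2p: "c2 * p (Suc n) K = - r" using pK gamma epos unfolding c2_def by (simp add: field_simps)
  have time: "eta \<gamma> r0 \<epsilon>0 = eta \<gamma> r \<epsilon> + c1 * (r0 - r) + c2 * (r0 * \<epsilon>0 - r * \<epsilon>) + D r0 \<epsilon>0"
    unfolding c1_def c2_def D_def using eta_split[OF r0pos e0pos rpos epos] .
  have D0: "D r0 \<epsilon>0 \<ge> 0" unfolding D_def using D_nonneg[OF r0pos e0pos rpos epos gamma] .
  have etaK: "eta \<gamma> r \<epsilon> - c1 * r - c2 * (r * \<epsilon>) = - r"
    using etaK_k[OF epos, of r "1 / (\<gamma> - 1)"] unfolding eta_def phi_rho_def phi_e_def c1_def c2_def
    by simp
  let ?F = "\<lambda>\<sigma>. area \<sigma> * rhof (Suc n) \<sigma> * u (Suc n) K \<sigma>"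
  let ?G = "\<lambda>\<sigma>. area \<sigma> * rhof (Suc n) \<sigma> * u (Suc n) K \<sigma> * ef (Suc n) \<sigma>"
  let ?H = "\<lambda>\<sigma>. area \<sigma> * u (Suc n) K \<sigma>"
  let ?R = "\<lambda>\<sigma>. area \<sigma> * u (Suc n) K \<sigma> * D (rhof (Suc n) \<sigma>) (ef (Suc n) \<sigma>)"
  have termeq: "area \<sigma> * eta \<gamma> (rhof (Suc n) \<sigma>) (ef (Suc n) \<sigma>) * u (Suc n) K \<sigma>
      = c1 * ?F \<sigma> + c2 * ?G \<sigma> + (c2 * p (Suc n) K) * ?H \<sigma> + ?R \<sigma>" if s: "\<sigma> \<in> EK K" for \<sigma>
  proof -
    have sE: "\<sigma> \<in> E" using s EK_sub K by auto
    have a: "rhof (Suc n) \<sigma> > 0" using rhof_pos sE n by simp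
    have b: "ef (Suc n) \<sigma> > 0" using ef_pos sE n by simp
    have eq: "eta \<gamma> (rhof (Suc n) \<sigma>) (ef (Suc n) \<sigma>) = eta \<gamma> r \<epsilon> + c1 * (rhof (Suc n) \<sigma> - r)
      + c2 * (rhof (Suc n) \<sigma> * ef (Suc n) \<sigma> - r * \<epsilon>) + D (rhof (Suc n) \<sigma>) (ef (Suc n) \<sigma>)"
      unfolding c1_def c2_def D_def using eta_split[OF a b rpos epos] .
    have eq2: "eta \<gamma> (rhof (Suc n) \<sigma>) (ef (Suc n) \<sigma>) = c1 * rhof (Suc n) \<sigma>
      + c2 * (rhof (Suc n) \<sigma> * ef (Suc n) \<sigma>) + c2 * p (Suc n) K + D (rhof (Suc n) \<sigma>) (ef (Suc n) \<sigma>)"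
      using eq etaK c2p by (simp add: algebra_simps)
    show ?thesis by (simp add: eq2 algebra_simps)
  qed
  have sumeq: "(\<Sum>\<sigma>\<in>EK K. area \<sigma> * eta \<gamma> (rhof (Suc n) \<sigma>) (ef (Suc n) \<sigma>) * u (Suc n) K \<sigma>)
     = c1 * sum ?F (EK K) + c2 * sum ?G (EK K) + (c2 * p (Suc n) K) * sum ?H (EK K) + sum ?R (EK K)"
    by (simp add: termeq sum.distrib sum_distrib_left)
  have Rnp: "sum ?R (EK K) \<le> 0"
  proof (rule sum_nonpos)
    fix \<sigma> assume s: "\<sigma> \<in> EK K"
    have sE: "\<sigma> \<in> E" using s EK_sub K by auto
    have ar: "area \<sigma> > 0" using area_pos sE by simp
    have a: "rhof (Suc n) \<sigma> > 0" using rhof_pos sE n by simp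
    have b: "ef (Suc n) \<sigma> > 0" using ef_pos sE n by simp
    have Dn: "D (rhof (Suc n) \<sigma>) (ef (Suc n) \<sigma>) \<ge> 0"
      unfolding D_def using D_nonneg[OF a b rpos epos gamma] .
    show "?R \<sigma> \<le> 0"
    proof (cases "u (Suc n) K \<sigma> > 0")
      case True
      have sI: "\<sigma> \<in> Eint"
      proof (rule ccontr)
        assume "\<sigma> \<notin> Eint"
        then have "u (Suc n) K \<sigma> = 0" using u_ext K s by blast
        with True show False by simp
      qed
      then obtain L where fb: "face_between M EK Eint \<sigma> K L" using interior K s by blast
      have "rhof (Suc n) \<sigma> = r \<and> ef (Suc n) \<sigma> = \<epsilon>"
        using upwind n fb True unfolding r_def \<epsilon>_def by blast
      then have "D (rhof (Suc n) \<sigma>) (ef (Suc n) \<sigma>) = 0" unfolding D_def using epos by simp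
      then show ?thesis by simp
    next
      case False
      then have "u (Suc n) K \<sigma> \<le> 0" by simp
      then have "area \<sigma> * u (Suc n) K \<sigma> \<le> 0" using ar by (simp add: mult_nonneg_nonpos)
      then show ?thesis using Dn by (simp add: mult_nonpos_nonneg)
    qed
  qed
  have A: "V * (r - r0) + sum ?F (EK K) = 0" using mass K n unfolding V_def r_def r0_def by simp
  have B: "V * (r * \<epsilon> - r0 * \<epsilon>0) + sum ?G (EK K) + p (Suc n) K * sum ?H (EK K) \<ge> 0"
    using energy K n unfolding V_def r_def r0_def \<epsilon>_def \<epsilon>0_def by simp
  have cB: "c2 * (V * (r * \<epsilon> - r0 * \<epsilon>0) + sum ?G (EK K) + p (Suc n) K * sum ?H (EK K)) \<le> 0"
    using c2nonpos B by (simp add: mult_nonpos_nonneg)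
  have VD: "V * D r0 \<epsilon>0 \<ge> 0" using Vpos D0 by simp
  have LHS: "V * (eta \<gamma> r \<epsilon> - eta \<gamma> r0 \<epsilon>0) + (\<Sum>\<sigma>\<in>EK K. area \<sigma> * eta \<gamma> (rhof (Suc n) \<sigma>) (ef (Suc n) \<sigma>) * u (Suc n) K \<sigma>)
     = c1 * (V * (r - r0) + sum ?F (EK K)) + c2 * (V * (r * \<epsilon> - r0 * \<epsilon>0) + sum ?G (EK K) + p (Suc n) K * sum ?H (EK K))
       - V * D r0 \<epsilon>0 + sum ?R (EK K)"
    unfolding sumeq time by (simp add: algebra_simps)
  have "V * (eta \<gamma> r \<epsilon> - eta \<gamma> r0 \<epsilon>0) + (\<Sum>\<sigma>\<in>EK K. area \<sigma> * eta \<gamma> (rhof (Suc n) \<sigma>) (ef (Suc n) \<sigma>) * u (Suc n) K \<sigma>) \<le> 0"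
    unfolding LHS A using cB VD Rnp by simp
  then show "vol K / dt * (eta \<gamma> (rho (Suc n) K) (e (Suc n) K) - eta \<gamma> (rho n K) (e n K))
        + (\<Sum>\<sigma>\<in>EK K. area \<sigma> * eta \<gamma> (rhof (Suc n) \<sigma>) (ef (Suc n) \<sigma>) * u (Suc n) K \<sigma>) \<le> 0"
    unfolding V_def r_def \<epsilon>_def r0_def \<epsilon>0_def .
qed

end
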